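(* Let $Y=\beta+\sigma\xi\in\mathbb{R}^p$ with $\beta\in\mathbb{R}^p$ unknown, $\sigma>0$ and $\xi\sim\mathcal{N}(0,\mathbb{I}_p)$. Let $q\ge1$, $s<p/4$, and let $\hat\beta^s$ be the estimator $\hat\beta^s_j:=Y_j\mathbf{1}\{|Y_j|\ge t^*_s\}$, $j=1,\dots,p$, where $t^*_s:=\sqrt{2\sigma^2\log(p/s-1)+\sigma^2q\log\log(p/s-1)}$. Then for all $a>0$, $$\sup_{\beta\in\Omega^p_{s,a}}\mathbf{E}_\beta\big(\|\hat\beta^s-\beta\|_q^q\big)\ \le\ C_q\,\Phi_{ad}(a),$$ where $C_q$ is a constant depending only on $q$.
   Context: $\Omega^p_{s,a}=\{\beta\in\mathbb{R}^p:\ |\beta|_0\le s\ \text{and}\ |\beta_i|\ge a\ \forall i\in S_\beta\}$, where $|\beta|_0$ is the number of nonzero entries and $S_\beta$ the set of indices of nonzero entries; $\mathbf{E}_\beta$ is expectation when the true parameter is $\beta$; $\|\cdot\|_q$ is the $\ell_q$ norm. $\sigma_q:=(\mathbf{E}|\zeta|^q)^{1/q}$ for $\zeta\sim\mathcal{N}(0,\sigma^2)$. $a_q(1):=\sqrt{2\sigma^2\log(\frac ps-1)+q\sigma^2\log\log(\frac ps-1)}+\sqrt{q\sigma^2\log\log(\frac ps-1)}$. Define $\Phi_{ad}(a):=\sigma_q^qs$ if $a\ge a_q(1)$, and $\Phi_{ad}(a):=s\sigma^q(2\log(\frac ps-1))^{q/2}$ otherwise. *)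

theory Defs
  imports "HOL-Probability.Probability"
begin

text \<open>Vectors in R^p are represented as functions nat => real; only indices in {..<p} matter.\<close>

definition gauss1 :: "real measure" where
  "gauss1 = density lborel std_normal_density"

definition gaussp :: "nat \<Rightarrow> (nat \<Rightarrow> real) measure" where
  "gaussp p = PiM {..<p} (\<lambda>_. gauss1)"

definition Omega :: "nat \<Rightarrow> nat \<Rightarrow> real \<Rightarrow> (nat \<Rightarrow> real) set" where
  "Omega p s a = {\<beta>. card {i\<in>{..<p}. \<beta> i \<noteq> 0} \<le> s \<and>
                     (\<forall>i\<in>{..<p}. \<beta> i \<noteq> 0 \<longrightarrow> \<bar>\<beta> i\<bar> \<ge> a)}"

definition tstar :: "nat \<Rightarrow> nat \<Rightarrow> real \<Rightarrow> real \<Rightarrow> real" where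
  "tstar p s \<sigma> q = sqrt (2 * \<sigma>\<^sup>2 * ln (real p / real s - 1)
                         + \<sigma>\<^sup>2 * q * ln (ln (real p / real s - 1)))"

definition beta_hat :: "nat \<Rightarrow> nat \<Rightarrow> real \<Rightarrow> real \<Rightarrow> (nat \<Rightarrow> real) \<Rightarrow> nat \<Rightarrow> real" where
  "beta_hat p s \<sigma> q Y j = (if \<bar>Y j\<bar> \<ge> tstar p s \<sigma> q then Y j else 0)"

definition sigma_q_pow :: "real \<Rightarrow> real \<Rightarrow> real" where
  "sigma_q_pow \<sigma> q = (\<integral>x. \<bar>\<sigma> * x\<bar> powr q \<partial>gauss1)"

definition a_q1 :: "nat \<Rightarrow> nat \<Rightarrow> real \<Rightarrow> real \<Rightarrow> real" where
  "a_q1 p s \<sigma> q = sqrt (2 * \<sigma>\<^sup>2 * ln (real p / real s - 1)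
                         + q * \<sigma>\<^sup>2 * ln (ln (real p / real s - 1)))
                  + sqrt (q * \<sigma>\<^sup>2 * ln (ln (real p / real s - 1)))"

definition Phi_ad :: "nat \<Rightarrow> nat \<Rightarrow> real \<Rightarrow> real \<Rightarrow> real \<Rightarrow> real" where
  "Phi_ad p s \<sigma> q a = (if a \<ge> a_q1 p s \<sigma> q then sigma_q_pow \<sigma> q * real s
                        else real s * \<sigma> powr q * (2 * ln (real p / real s - 1)) powr (q / 2))"

text \<open>Risk E_beta ||beta_hat - beta||_q^q, where Y = beta + sigma xi.
  Stated as a nonnegative (ennreal) integral so that integrability is not an issue.\<close>
definition risk :: "nat \<Rightarrow> nat \<Rightarrow> real \<Rightarrow> real \<Rightarrow> (nat \<Rightarrow> real) \<Rightarrow> ennreal" where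
  "risk p s \<sigma> q \<beta> = (\<integral>\<^sup>+ \<xi>. ennreal (\<Sum>j<p.
        \<bar>beta_hat p s \<sigma> q (\<lambda>i. \<beta> i + \<sigma> * \<xi> i) j - \<beta> j\<bar> powr q) \<partial>gaussp p)"

end

theory Submission imports Defs begin

lemma gauss1_prob: "prob_space gauss1"
  unfolding gauss1_def using prob_space_normal_density[of 1 0] by simp

lemma sets_gauss1[simp, measurable_cong]: "sets gauss1 = sets borel"
  unfolding gauss1_def by simp

lemma space_gauss1[simp]: "space gauss1 = UNIV"
  unfolding gauss1_def by simp

lemma nn_gauss1:
  assumes [measurable]: "f \<in> borel_measurable borel"
  shows "(\<integral>\<^sup>+x. f x \<partial>gauss1) = (\<integral>\<^sup>+x. ennreal (std_normal_density x) * f x \<partial>lborel)"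
  unfolding gauss1_def by (subst nn_integral_density) auto

lemma phi_shift:
  assumes "T \<ge> 0" "u \<ge> 0"
  shows "std_normal_density (T + u) \<le> exp (- T\<^sup>2 / 2) * std_normal_density u"
proof -
  have "exp (- (T + u)\<^sup>2 / 2) \<le> exp (- T\<^sup>2 / 2) * exp (- u\<^sup>2 / 2)"
  proof -
    have "(T+u)^2 = T^2+u^2+2*(T*u)" by (simp add: power2_eq_square algebra_simps)
    then have "- (T + u)\<^sup>2 / 2 \<le> - T\<^sup>2 / 2 + - u\<^sup>2 / 2" using mult_nonneg_nonneg[OF assms] by simp
    then show ?thesis unfolding exp_add[symmetric] by simp
  qed
  then show ?thesis unfolding std_normal_density_def
    by (simp add: divide_right_mono)
qed

lemma tail_one:
  fixes g :: "real \<Rightarrow> real"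
  assumes [measurable]: "g \<in> borel_measurable borel" and T: "T \<ge> 0" and g: "\<And>x. g x \<ge> 0"
  shows "(\<integral>\<^sup>+x. ennreal (g x) * indicator {T..} x \<partial>gauss1)
     \<le> ennreal (exp (- T\<^sup>2 / 2)) * (\<integral>\<^sup>+u. ennreal (g (T + \<bar>u\<bar>)) \<partial>gauss1)"
proof -
  have "(\<integral>\<^sup>+x. ennreal (g x) * indicator {T..} x \<partial>gauss1)
     = (\<integral>\<^sup>+x. ennreal (std_normal_density x) * (ennreal (g x) * indicator {T..} x) \<partial>lborel)"
    by (rule nn_gauss1) measurable
  also have "\<dots> = (\<integral>\<^sup>+u. ennreal (std_normal_density (T + u)) * (ennreal (g (T + u)) * indicator {T..} (T + u)) \<partial>lborel)"
    using nn_integral_real_affine[of "\<lambda>x. ennreal (std_normal_density x) * (ennreal (g x) * indicator {T..} x)" 1 T] by simp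
  also have "\<dots> \<le> (\<integral>\<^sup>+u. ennreal (exp (- T\<^sup>2 / 2)) * (ennreal (std_normal_density u) * ennreal (g (T + \<bar>u\<bar>))) \<partial>lborel)"
  proof -
    have "ennreal (std_normal_density (T + u)) * (ennreal (g (T + u)) * indicator {T..} (T + u))
        \<le> ennreal (exp (- T\<^sup>2 / 2)) * (ennreal (std_normal_density u) * ennreal (g (T + \<bar>u\<bar>)))" for u
    proof (cases "u \<ge> 0")
      case True
      have "ennreal (std_normal_density (T + u)) * ennreal (g (T + u))
         \<le> ennreal (exp (- T\<^sup>2 / 2) * std_normal_density u) * ennreal (g (T + u))"
        by (intro mult_right_mono ennreal_leI phi_shift T True) auto
      then show ?thesis using True
        by (simp add: indicator_def ennreal_mult' mult.assoc normal_density_nonneg)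
    qed (auto simp: indicator_def)
    then show ?thesis by (intro nn_integral_mono) simp
  qed
  also have "\<dots> = ennreal (exp (- T\<^sup>2 / 2)) * (\<integral>\<^sup>+u. ennreal (std_normal_density u) * ennreal (g (T + \<bar>u\<bar>)) \<partial>lborel)"
    by (rule nn_integral_cmult) measurable
  also have "(\<integral>\<^sup>+u. ennreal (std_normal_density u) * ennreal (g (T + \<bar>u\<bar>)) \<partial>lborel) = (\<integral>\<^sup>+u. ennreal (g (T + \<bar>u\<bar>)) \<partial>gauss1)"
    by (rule nn_gauss1[symmetric]) measurable
  finally show ?thesis .
qed


lemma gauss1_reflect:
  assumes [measurable]: "f \<in> borel_measurable borel"
  shows "(\<integral>\<^sup>+x. f (- x) \<partial>gauss1) = (\<integral>\<^sup>+x. f x \<partial>gauss1)"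
proof -
  have "(\<integral>\<^sup>+x. f x \<partial>gauss1) = (\<integral>\<^sup>+x. ennreal (std_normal_density x) * f x \<partial>lborel)"
    by (rule nn_gauss1) measurable
  also have "\<dots> = (\<integral>\<^sup>+x. ennreal (std_normal_density (- x)) * f (- x) \<partial>lborel)"
    using nn_integral_real_affine[of "\<lambda>x. ennreal (std_normal_density x) * f x" "-1" 0] by simp
  also have "\<dots> = (\<integral>\<^sup>+x. ennreal (std_normal_density x) * f (- x) \<partial>lborel)"
    by (simp add: std_normal_density_def)
  also have "\<dots> = (\<integral>\<^sup>+x. f (- x) \<partial>gauss1)"
    by (rule nn_gauss1[symmetric]) measurable
  finally show ?thesis ..
qed

lemma tail_two:
  fixes g :: "real \<Rightarrow> real"
  assumes [measurable]: "g \<in> borel_measurable borel" and T: "T \<ge> 0" and g: "\<And>x. g x \<ge> 0"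
  shows "(\<integral>\<^sup>+x. ennreal (g x) * indicator {x. T \<le> \<bar>x\<bar>} x \<partial>gauss1)
     \<le> ennreal (exp (- T\<^sup>2 / 2)) * (\<integral>\<^sup>+u. ennreal (g (T + \<bar>u\<bar>) + g (- (T + \<bar>u\<bar>))) \<partial>gauss1)"
proof -
  have "(\<integral>\<^sup>+x. ennreal (g x) * indicator {x. T \<le> \<bar>x\<bar>} x \<partial>gauss1)
     \<le> (\<integral>\<^sup>+x. ennreal (g x) * indicator {T..} x + ennreal (g x) * indicator {T..} (- x) \<partial>gauss1)"
    by (intro nn_integral_mono) (auto simp: indicator_def)
  also have "\<dots> = (\<integral>\<^sup>+x. ennreal (g x) * indicator {T..} x \<partial>gauss1) + (\<integral>\<^sup>+x. ennreal (g x) * indicator {T..} (- x) \<partial>gauss1)"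
    by (rule nn_integral_add) measurable
  also have "(\<integral>\<^sup>+x. ennreal (g x) * indicator {T..} (- x) \<partial>gauss1) = (\<integral>\<^sup>+x. ennreal (g (- x)) * indicator {T..} x \<partial>gauss1)"
    using gauss1_reflect[of "\<lambda>x. ennreal (g (- x)) * indicator {T..} x"] by simp
  also have "(\<integral>\<^sup>+x. ennreal (g x) * indicator {T..} x \<partial>gauss1) + (\<integral>\<^sup>+x. ennreal (g (- x)) * indicator {T..} x \<partial>gauss1)
     \<le> ennreal (exp (- T\<^sup>2 / 2)) * (\<integral>\<^sup>+u. ennreal (g (T + \<bar>u\<bar>)) \<partial>gauss1)
       + ennreal (exp (- T\<^sup>2 / 2)) * (\<integral>\<^sup>+u. ennreal (g (- (T + \<bar>u\<bar>))) \<partial>gauss1)"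
    using tail_one[of g T] tail_one[of "\<lambda>x. g (- x)" T] T g by (intro add_mono) auto
  also have "\<dots> = ennreal (exp (- T\<^sup>2 / 2)) * (\<integral>\<^sup>+u. ennreal (g (T + \<bar>u\<bar>)) + ennreal (g (- (T + \<bar>u\<bar>))) \<partial>gauss1)"
    by (subst nn_integral_add) (auto simp: distrib_left)
  also have "\<dots> = ennreal (exp (- T\<^sup>2 / 2)) * (\<integral>\<^sup>+u. ennreal (g (T + \<bar>u\<bar>) + g (- (T + \<bar>u\<bar>))) \<partial>gauss1)"
    using g by (simp add: ennreal_plus)
  finally show ?thesis .
qed

lemma proj_gaussp:
  assumes [measurable]: "h \<in> borel_measurable borel" and j: "j < p"
  shows "(\<integral>\<^sup>+\<xi>. h (\<xi> j) \<partial>gaussp p) = (\<integral>\<^sup>+x. h x \<partial>gauss1)"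
proof -
  have d: "distr (gaussp p) gauss1 (\<lambda>\<omega>. \<omega> j) = gauss1"
    unfolding gaussp_def by (rule distr_PiM_component) (use j gauss1_prob in auto)
  have "(\<integral>\<^sup>+x. h x \<partial>gauss1) = (\<integral>\<^sup>+x. h x \<partial>distr (gaussp p) gauss1 (\<lambda>\<omega>. \<omega> j))"
    by (simp add: d)
  also have "\<dots> = (\<integral>\<^sup>+\<xi>. h (\<xi> j) \<partial>gaussp p)"
    by (rule nn_integral_distr) (use j in \<open>auto simp: gaussp_def\<close>)
  finally show ?thesis ..
qed


lemma powr_le_poly:
  fixes x q :: real assumes "q \<ge> 0"
  shows "\<bar>x\<bar> powr q \<le> 1 + \<bar>x\<bar> ^ nat \<lceil>q\<rceil>"
proof (cases "\<bar>x\<bar> \<le> 1")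
  case True
  then have "\<bar>x\<bar> powr q \<le> 1" using assms by (simp add: powr_le1)
  then show ?thesis by (smt (verit) zero_le_power abs_ge_zero)
next
  case False
  then have "\<bar>x\<bar> powr q \<le> \<bar>x\<bar> powr (real (nat \<lceil>q\<rceil>))"
    by (intro powr_mono) (auto simp: real_nat_ceiling_ge)
  also have "\<dots> = \<bar>x\<bar> ^ nat \<lceil>q\<rceil>" using False by (simp add: powr_realpow)
  finally show ?thesis by simp
qed

lemma integrable_gauss1_powr:
  assumes "q \<ge> 0"
  shows "integrable gauss1 (\<lambda>x. \<bar>x\<bar> powr q)"
proof -
  let ?n = "nat \<lceil>q\<rceil>"
  have "integrable lborel (\<lambda>x. std_normal_density x * \<bar>x\<bar> ^ 0 + std_normal_density x * \<bar>x\<bar> ^ ?n)"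
    by (intro Bochner_Integration.integrable_add integrable_std_normal_moment_abs)
  then have i: "integrable lborel (\<lambda>x. std_normal_density x * (1 + \<bar>x\<bar> ^ ?n))"
    by (simp add: distrib_left)
  have "integrable lborel (\<lambda>x. std_normal_density x * \<bar>x\<bar> powr q)"
  proof (rule Bochner_Integration.integrable_bound[OF i])
    show "AE x in lborel. norm (std_normal_density x * \<bar>x\<bar> powr q) \<le> norm (std_normal_density x * (1 + \<bar>x\<bar> ^ ?n))"
      using powr_le_poly[OF assms] by (auto simp: abs_mult normal_density_nonneg intro!: mult_left_mono)
  qed measurable
  then show ?thesis unfolding gauss1_def
    by (subst integrable_density) (auto simp: normal_density_nonneg)
qed

lemma nn_gauss1_powr:
  assumes "q \<ge> 0"
  shows "(\<integral>\<^sup>+x. ennreal (\<bar>x\<bar> powr q) \<partial>gauss1) = ennreal (sigma_q_pow 1 q)"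
  unfolding sigma_q_pow_def using integrable_gauss1_powr[OF assms]
  by (simp add: nn_integral_eq_integral)

lemma sigma_q_pow_pos:
  assumes "q \<ge> 0"
  shows "sigma_q_pow 1 q > 0"
proof -
  have nn: "sigma_q_pow 1 q \<ge> 0" unfolding sigma_q_pow_def by simp
  have "sigma_q_pow 1 q \<noteq> 0"
  proof
    assume "sigma_q_pow 1 q = 0"
    then have "AE x in gauss1. \<bar>x\<bar> powr q = 0"
      unfolding sigma_q_pow_def using integrable_gauss1_powr[OF assms]
      by (subst (asm) integral_nonneg_eq_0_iff_AE) auto
    then have "AE x in gauss1. x = 0" by simp
    then have "AE x in lborel. 0 < std_normal_density x \<longrightarrow> x = 0"
      unfolding gauss1_def by (subst (asm) AE_density) auto
    then have "AE x in lborel. (x::real) = 0" by (simp add: std_normal_density_def)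
    then have "AE x in (lborel::real measure). False" using AE_lborel_singleton[of "0::real"]
      by (auto elim: AE_mp)
    then have "ae_filter (lborel::real measure) = bot" using trivial_limit_def by blast
    then show False unfolding ae_filter_eq_bot_iff by simp
  qed
  with nn show ?thesis by simp
qed

lemma sigma_q_pow_scale:
  assumes "\<sigma> > 0"
  shows "sigma_q_pow \<sigma> q = \<sigma> powr q * sigma_q_pow 1 q"
  unfolding sigma_q_pow_def using assms by (simp add: abs_mult powr_mult)


definition F :: "real \<Rightarrow> real \<Rightarrow> real \<Rightarrow> real \<Rightarrow> real \<Rightarrow> real" where
  "F t \<sigma> q b x = \<bar>(if t \<le> \<bar>b + \<sigma> * x\<bar> then b + \<sigma> * x else 0) - b\<bar> powr q"

lemma F_meas[measurable]: "(\<lambda>x. F t \<sigma> q b x) \<in> borel_measurable borel"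
  unfolding F_def by measurable

lemma sum_powr_le:
  fixes T u q :: real assumes "T \<ge> 0" "u \<ge> 0" "q \<ge> 0"
  shows "(T + u) powr q \<le> 2 powr q * (T powr q + u powr q)"
proof -
  have "(T + u) powr q \<le> (2 * max T u) powr q"
    using assms by (intro powr_mono2) auto
  also have "\<dots> = 2 powr q * max T u powr q" using assms by (simp add: powr_mult)
  also have "max T u powr q \<le> T powr q + u powr q" by (simp add: max_def)
  finally show ?thesis by simp
qed

lemma prob_gauss1_const: "(\<integral>\<^sup>+x. ennreal c \<partial>gauss1) = ennreal c"
proof -
  interpret prob_space gauss1 by (rule gauss1_prob)
  show ?thesis using emeasure_space_1 by simp
qed

lemma emeasure_gauss1_UNIV[simp]: "emeasure gauss1 UNIV = 1"
  using prob_gauss1_const[of 1] by simp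

lemma off_bound:
  assumes q: "q \<ge> 1" and s: "\<sigma> > 0" and T: "T \<ge> 0"
  shows "(\<integral>\<^sup>+x. ennreal (F (\<sigma> * T) \<sigma> q 0 x) \<partial>gauss1)
     \<le> ennreal (\<sigma> powr q * (2 * 2 powr q) * exp (- T\<^sup>2 / 2) * (T powr q + sigma_q_pow 1 q))"
proof -
  define M where "M = sigma_q_pow 1 q"
  have M0: "M \<ge> 0" using sigma_q_pow_pos[of q] q unfolding M_def by simp
  have pw: "F (\<sigma> * T) \<sigma> q 0 x = \<sigma> powr q * (\<bar>x\<bar> powr q * indicator {x. T \<le> \<bar>x\<bar>} x)" for x
    using s by (auto simp: F_def indicator_def abs_mult powr_mult)
  have "(\<integral>\<^sup>+x. ennreal (F (\<sigma> * T) \<sigma> q 0 x) \<partial>gauss1)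
      = (\<integral>\<^sup>+x. ennreal (\<sigma> powr q) * (ennreal (\<bar>x\<bar> powr q) * indicator {x. T \<le> \<bar>x\<bar>} x) \<partial>gauss1)"
    unfolding pw by (intro nn_integral_cong) (auto simp: ennreal_mult indicator_def)
  also have "\<dots> = ennreal (\<sigma> powr q) * (\<integral>\<^sup>+x. ennreal (\<bar>x\<bar> powr q) * indicator {x. T \<le> \<bar>x\<bar>} x \<partial>gauss1)"
    by (rule nn_integral_cmult) measurable
  also have "\<dots> \<le> ennreal (\<sigma> powr q) * (ennreal (exp (- T\<^sup>2 / 2)) * (\<integral>\<^sup>+u. ennreal (\<bar>T + \<bar>u\<bar>\<bar> powr q + \<bar>- (T + \<bar>u\<bar>)\<bar> powr q) \<partial>gauss1))"
    by (intro mult_left_mono tail_two[of "\<lambda>x. \<bar>x\<bar> powr q", OF _ T]) auto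
  also have "(\<integral>\<^sup>+u. ennreal (\<bar>T + \<bar>u\<bar>\<bar> powr q + \<bar>- (T + \<bar>u\<bar>)\<bar> powr q) \<partial>gauss1)
      \<le> (\<integral>\<^sup>+u. ennreal ((2 * 2 powr q) * T powr q) + ennreal (2 * 2 powr q) * ennreal (\<bar>u\<bar> powr q) \<partial>gauss1)"
  proof (intro nn_integral_mono)
    fix u :: real
    have "\<bar>T + \<bar>u\<bar>\<bar> powr q + \<bar>- (T + \<bar>u\<bar>)\<bar> powr q = 2 * (T + \<bar>u\<bar>) powr q" using T by (simp add: add.commute)
    also have "\<dots> \<le> 2 * (2 powr q * (T powr q + \<bar>u\<bar> powr q))"
      using sum_powr_le[of T "\<bar>u\<bar>" q] T q by simp
    finally show "ennreal (\<bar>T + \<bar>u\<bar>\<bar> powr q + \<bar>- (T + \<bar>u\<bar>)\<bar> powr q)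
      \<le> ennreal ((2 * 2 powr q) * T powr q) + ennreal (2 * 2 powr q) * ennreal (\<bar>u\<bar> powr q)"
      by (simp add: ennreal_plus[symmetric] ennreal_mult[symmetric] algebra_simps del: ennreal_plus)
  qed
  also have "\<dots> = ennreal ((2 * 2 powr q) * T powr q) + ennreal (2 * 2 powr q) * ennreal M"
    unfolding M_def
    by (subst nn_integral_add) (auto simp: nn_integral_cmult nn_gauss1_powr[OF order_trans[OF zero_le_one q]])
  also have "\<dots> = ennreal ((2 * 2 powr q) * (T powr q + M))"
    using M0 by (simp add: ennreal_plus[symmetric] ennreal_mult[symmetric] algebra_simps del: ennreal_plus)
  finally show ?thesis unfolding M_def[symmetric]
    by (simp add: ennreal_mult[symmetric] M0 mult_ac mult_right_mono)
qed


lemma F_pw: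
  assumes s: "\<sigma> > 0"
  shows "F t \<sigma> q b x \<le> \<sigma> powr q * \<bar>x\<bar> powr q + \<bar>b\<bar> powr q * indicator {x. \<bar>b + \<sigma> * x\<bar> < t} x"
  using s by (auto simp: F_def indicator_def abs_mult powr_mult)

lemma on_bound_gen:
  assumes q: "q \<ge> 1" and s: "\<sigma> > 0" and S: "S \<ge> 0" and bt: "\<sigma> * S \<le> \<bar>b\<bar> - t"
  shows "(\<integral>\<^sup>+x. ennreal (F t \<sigma> q b x) \<partial>gauss1)
     \<le> ennreal (\<sigma> powr q * sigma_q_pow 1 q + \<bar>b\<bar> powr q * (2 * exp (- S\<^sup>2 / 2)))"
proof -
  define M where "M = sigma_q_pow 1 q"
  have M0: "M \<ge> 0" using sigma_q_pow_pos[of q] q unfolding M_def by simp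
  have incl: "indicator {x. \<bar>b + \<sigma> * x\<bar> < t} x \<le> (indicator {x. S \<le> \<bar>x\<bar>} x :: real)" for x
  proof (cases "\<bar>b + \<sigma> * x\<bar> < t")
    case True
    have "\<bar>b\<bar> \<le> \<bar>b + \<sigma> * x\<bar> + \<sigma> * \<bar>x\<bar>" using s abs_triangle_ineq4[of "b + \<sigma> * x" "\<sigma> * x"] by (simp add: abs_mult)
    then have "\<sigma> * S \<le> \<sigma> * \<bar>x\<bar>" using True bt by linarith
    then have "S \<le> \<bar>x\<bar>" using s by simp
    then show ?thesis by (simp add: indicator_def)
  qed (simp add: indicator_def)
  have "(\<integral>\<^sup>+x. ennreal (F t \<sigma> q b x) \<partial>gauss1)
     \<le> (\<integral>\<^sup>+x. ennreal (\<sigma> powr q) * ennreal (\<bar>x\<bar> powr q) + ennreal (\<bar>b\<bar> powr q) * (ennreal 1 * indicator {x. S \<le> \<bar>x\<bar>} x) \<partial>gauss1)"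
  proof (intro nn_integral_mono)
    fix x
    have "F t \<sigma> q b x \<le> \<sigma> powr q * \<bar>x\<bar> powr q + \<bar>b\<bar> powr q * indicator {x. S \<le> \<bar>x\<bar>} x"
      using F_pw[OF s, of t q b x] mult_left_mono[OF incl[of x], of "\<bar>b\<bar> powr q"] by simp
    then show "ennreal (F t \<sigma> q b x) \<le> ennreal (\<sigma> powr q) * ennreal (\<bar>x\<bar> powr q) + ennreal (\<bar>b\<bar> powr q) * (ennreal 1 * indicator {x. S \<le> \<bar>x\<bar>} x)"
      by (cases "S \<le> \<bar>x\<bar>") (auto simp: ennreal_plus[symmetric] ennreal_mult[symmetric] ennreal_leI indicator_def simp del: ennreal_plus)
  qed
  also have "\<dots> = ennreal (\<sigma> powr q) * ennreal M + ennreal (\<bar>b\<bar> powr q) * (\<integral>\<^sup>+x. ennreal 1 * indicator {x. S \<le> \<bar>x\<bar>} x \<partial>gauss1)"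
    unfolding M_def
    by (subst nn_integral_add) (auto simp: nn_integral_cmult nn_gauss1_powr[OF order_trans[OF zero_le_one q]])
  also have "\<dots> \<le> ennreal (\<sigma> powr q) * ennreal M + ennreal (\<bar>b\<bar> powr q) * (ennreal (exp (- S\<^sup>2 / 2)) * (\<integral>\<^sup>+u. ennreal (1 + 1) \<partial>gauss1))"
    using tail_two[of "\<lambda>x. 1" S] S by (intro add_mono mult_left_mono) auto
  also have "\<dots> = ennreal (\<sigma> powr q * M + \<bar>b\<bar> powr q * (2 * exp (- S\<^sup>2 / 2)))"
    using M0 by (simp add: prob_gauss1_const ennreal_mult ennreal_plus mult_ac)
  finally show ?thesis unfolding M_def .
qed

lemma on_bound_triv:
  assumes q: "q \<ge> 1" and s: "\<sigma> > 0"
  shows "(\<integral>\<^sup>+x. ennreal (F t \<sigma> q b x) \<partial>gauss1)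
     \<le> ennreal (\<sigma> powr q * sigma_q_pow 1 q + \<bar>b\<bar> powr q)"
proof -
  define M where "M = sigma_q_pow 1 q"
  have M0: "M \<ge> 0" using sigma_q_pow_pos[of q] q unfolding M_def by simp
  have "(\<integral>\<^sup>+x. ennreal (F t \<sigma> q b x) \<partial>gauss1)
     \<le> (\<integral>\<^sup>+x. ennreal (\<sigma> powr q) * ennreal (\<bar>x\<bar> powr q) + ennreal (\<bar>b\<bar> powr q) \<partial>gauss1)"
  proof (intro nn_integral_mono)
    fix x
    have "F t \<sigma> q b x \<le> \<sigma> powr q * \<bar>x\<bar> powr q + \<bar>b\<bar> powr q"
      using F_pw[OF s, of t q b x] by (cases "\<bar>b + \<sigma> * x\<bar> < t") (auto intro: order_trans)
    then show "ennreal (F t \<sigma> q b x) \<le> ennreal (\<sigma> powr q) * ennreal (\<bar>x\<bar> powr q) + ennreal (\<bar>b\<bar> powr q)"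
      by (simp add: ennreal_plus[symmetric] ennreal_mult[symmetric] ennreal_leI del: ennreal_plus)
  qed
  also have "\<dots> = ennreal (\<sigma> powr q) * ennreal M + ennreal (\<bar>b\<bar> powr q)"
    unfolding M_def
    by (subst nn_integral_add) (auto simp: nn_integral_cmult nn_gauss1_powr[OF order_trans[OF zero_le_one q]] prob_gauss1_const)
  finally show ?thesis unfolding M_def[symmetric]
    by (simp add: ennreal_mult[symmetric] ennreal_plus[symmetric] M0 del: ennreal_plus)
qed


lemma powr_le_exp:
  fixes y k :: real assumes y: "y \<ge> 0" and k: "k > 0"
  shows "y powr k \<le> k powr k * exp y"
proof (cases "y = 0")
  case True then show ?thesis using k by simp
next
  case False
  then have y0: "y > 0" using y by simp
  have "ln (y / k) \<le> y / k - 1" using y0 k by (intro ln_le_minus_one) simp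
  then have "ln y - ln k \<le> y / k" using y0 k by (simp add: ln_div)
  then have "k * (ln y - ln k) \<le> k * (y / k)" using k by (intro mult_left_mono) auto
  then have "k * ln y \<le> k * ln k + y" using k by (simp add: algebra_simps)
  then have "exp (k * ln y) \<le> exp (k * ln k + y)" by simp
  then show ?thesis using y0 k by (simp add: powr_def exp_add)
qed

lemma Egen:
  fixes c q d :: real assumes c: "c \<ge> 0" and q: "q > 0" and d: "d > 0"
  shows "c powr q * exp (- c\<^sup>2 / d) \<le> (d * q / 2) powr (q / 2)"
proof -
  have "c powr q = (c\<^sup>2 / d * d) powr (q / 2)"
  proof (cases "c = 0")
    case False
    then have "c > 0" using c by simp
    then have "c\<^sup>2 = c powr 2" by (simp add: powr_realpow)
    then show ?thesis using d by (simp add: powr_powr)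
  qed (use q in simp)
  also have "\<dots> = (c\<^sup>2 / d) powr (q / 2) * d powr (q / 2)" by (rule powr_mult; use d in simp)
  also have "\<dots> \<le> ((q / 2) powr (q / 2) * exp (c\<^sup>2 / d)) * d powr (q / 2)"
    using q d by (intro mult_right_mono powr_le_exp) auto
  also have "\<dots> = (d * q / 2) powr (q / 2) * exp (c\<^sup>2 / d)"
    using q d by (simp add: powr_mult[symmetric] mult.commute)
  finally show ?thesis by (simp add: exp_minus field_simps)
qed


lemma powr_sq_half:
  fixes x q :: real assumes "x \<ge> 0"
  shows "x powr q = (x\<^sup>2) powr (q / 2)"
proof (cases "x = 0")
  case False
  then have "x\<^sup>2 = x powr 2" using assms by (simp add: powr_realpow)
  then show ?thesis by (simp add: powr_powr)
qed simp

lemma TL_bound0: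
  fixes T L q :: real assumes L: "L > 0" and T: "T \<ge> 0" and TL: "T\<^sup>2 \<le> (2 + q) * L" and q: "q > 0"
  shows "T powr q \<le> (2 + q) powr (q / 2) * L powr (q / 2)"
proof -
  have "T powr q = (T\<^sup>2) powr (q / 2)" by (rule powr_sq_half[OF T])
  also have "\<dots> \<le> ((2 + q) * L) powr (q / 2)" using TL q by (intro powr_mono2) auto
  also have "\<dots> = (2 + q) powr (q / 2) * L powr (q / 2)" using q L by (simp add: powr_mult)
  finally show ?thesis .
qed

lemma TL_bound:
  fixes T L q :: real assumes L: "L > 0" and T: "T \<ge> 0" and TL: "T\<^sup>2 \<le> (2 + q) * L" and q: "q > 0"
  shows "T powr q * L powr (- q / 2) \<le> (2 + q) powr (q / 2)"
proof -
  have "T powr q = (T\<^sup>2) powr (q / 2)" by (rule powr_sq_half[OF T])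
  also have "\<dots> \<le> ((2 + q) * L) powr (q / 2)" using TL q by (intro powr_mono2) auto
  also have "\<dots> = (2 + q) powr (q / 2) * L powr (q / 2)" using q L by (simp add: powr_mult)
  finally have X: "T powr q \<le> (2 + q) powr (q / 2) * L powr (q / 2)" .
  have "T powr q * L powr (- q / 2) \<le> (2 + q) powr (q / 2) * (L powr (q / 2) * L powr (- q / 2))"
    using mult_right_mono[OF X, of "L powr (- q / 2)"] by (simp add: mult.assoc)
  also have "L powr (q / 2) * L powr (- q / 2) = 1" using L by (simp add: powr_add[symmetric])
  finally show ?thesis by simp
qed

lemma on_general:
  assumes q: "q \<ge> 1" and s: "\<sigma> > 0" and T: "T \<ge> 0" and L: "L > 0" and TL: "T\<^sup>2 \<le> (2 + q) * L"
  shows "(\<integral>\<^sup>+x. ennreal (F (\<sigma> * T) \<sigma> q b x) \<partial>gauss1)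
     \<le> ennreal (\<sigma> powr q * (sigma_q_pow 1 q + 2 * (4 * q) powr (q / 2) + 2 powr q * (2 + q) powr (q / 2) * L powr (q / 2)))"
proof -
  define M where "M = sigma_q_pow 1 q"
  define c where "c = \<bar>b\<bar> / \<sigma>"
  have c0: "c \<ge> 0" using s by (simp add: c_def)
  have bc: "\<bar>b\<bar> powr q = \<sigma> powr q * c powr q" using s by (simp add: c_def powr_divide)
  have Xn: "0 \<le> 2 powr q * (2 + q) powr (q / 2) * L powr (q / 2)" by simp
  show ?thesis
  proof (cases "c \<ge> 2 * T")
    case True
    have A: "(\<integral>\<^sup>+x. ennreal (F (\<sigma> * T) \<sigma> q b x) \<partial>gauss1)
      \<le> ennreal (\<sigma> powr q * M + \<bar>b\<bar> powr q * (2 * exp (- (c / 2)\<^sup>2 / 2)))"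
      unfolding M_def
    proof (rule on_bound_gen[OF q s])
      show "0 \<le> c / 2" using c0 by simp
      have "\<sigma> * (2 * T) \<le> \<sigma> * c" using True s by (intro mult_left_mono) auto
      then have "\<sigma> * (c / 2) \<le> \<sigma> * c - \<sigma> * T" by (simp add: algebra_simps)
      then show "\<sigma> * (c / 2) \<le> \<bar>b\<bar> - \<sigma> * T" using s by (simp add: c_def)
    qed
    have e1: "\<bar>b\<bar> powr q * (2 * exp (- (c / 2)\<^sup>2 / 2)) = 2 * (\<sigma> powr q * (c powr q * exp (- c\<^sup>2 / 8)))"
      by (simp add: bc power_divide)
    have e2: "\<sigma> powr q * (c powr q * exp (- c\<^sup>2 / 8)) \<le> \<sigma> powr q * (4 * q) powr (q / 2)"
      using Egen[OF c0, of q 8] q by (intro mult_left_mono) auto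
    have e3: "0 \<le> \<sigma> powr q * (2 powr q * (2 + q) powr (q / 2) * L powr (q / 2))" by simp
    have "\<sigma> powr q * M + \<bar>b\<bar> powr q * (2 * exp (- (c / 2)\<^sup>2 / 2)) \<le> \<sigma> powr q * (M + 2 * (4 * q) powr (q / 2) + 2 powr q * (2 + q) powr (q / 2) * L powr (q / 2))"
      unfolding e1 distrib_left mult.left_commute[of "\<sigma> powr q" 2] using e2 e3 by linarith
    with \<open>(\<integral>\<^sup>+x. ennreal (F (\<sigma> * T) \<sigma> q b x) \<partial>gauss1) \<le> ennreal (\<sigma> powr q * M + \<bar>b\<bar> powr q * (2 * exp (- (c / 2)\<^sup>2 / 2)))\<close>
    show ?thesis unfolding M_def[symmetric] by (elim order_trans) (simp add: ennreal_leI)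
  next
    case False
    have "(\<integral>\<^sup>+x. ennreal (F (\<sigma> * T) \<sigma> q b x) \<partial>gauss1) \<le> ennreal (\<sigma> powr q * M + \<bar>b\<bar> powr q)"
      unfolding M_def by (rule on_bound_triv[OF q s])
    have "c powr q \<le> (2 * T) powr q" using False c0 q by (intro powr_mono2) auto
    also have "(2 * T) powr q = 2 powr q * T powr q" using T by (simp add: powr_mult)
    also have "\<dots> \<le> 2 powr q * ((2 + q) powr (q / 2) * L powr (q / 2))"
      using TL_bound0[OF L T TL] q by (intro mult_left_mono) auto
    finally have k: "\<sigma> powr q * c powr q \<le> \<sigma> powr q * (2 powr q * ((2 + q) powr (q / 2) * L powr (q / 2)))"
      by (intro mult_left_mono) auto
    have e3: "0 \<le> \<sigma> powr q * (2 * (4 * q) powr (q / 2))" by simp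
    have "\<sigma> powr q * M + \<bar>b\<bar> powr q \<le> \<sigma> powr q * (M + 2 * (4 * q) powr (q / 2) + 2 powr q * (2 + q) powr (q / 2) * L powr (q / 2))"
      unfolding bc distrib_left mult.assoc using k e3 by linarith
    with \<open>(\<integral>\<^sup>+x. ennreal (F (\<sigma> * T) \<sigma> q b x) \<partial>gauss1) \<le> ennreal (\<sigma> powr q * M + \<bar>b\<bar> powr q)\<close>
    show ?thesis unfolding M_def[symmetric] by (elim order_trans) (simp add: ennreal_leI)
  qed
qed


lemma on_large:
  assumes q: "q \<ge> 1" and s: "\<sigma> > 0" and T: "T \<ge> 0" and L: "L > 0" and TL: "T\<^sup>2 \<le> (2 + q) * L"
    and lL: "ln L \<ge> 0" and b: "\<bar>b\<bar> \<ge> \<sigma> * T + \<sigma> * sqrt (q * ln L)"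
  shows "(\<integral>\<^sup>+x. ennreal (F (\<sigma> * T) \<sigma> q b x) \<partial>gauss1)
     \<le> ennreal (\<sigma> powr q * (sigma_q_pow 1 q + 2 * 2 powr q * ((2 + q) powr (q / 2) + q powr (q / 2))))"
proof -
  define M where "M = sigma_q_pow 1 q"
  define c where "c = \<bar>b\<bar> / \<sigma>"
  define S where "S = c - T"
  have bc: "\<bar>b\<bar> powr q = \<sigma> powr q * c powr q" using s by (simp add: c_def powr_divide)
  have "\<sigma> * (T + sqrt (q * ln L)) \<le> \<sigma> * c" using b s by (simp add: c_def algebra_simps)
  then have cT: "T + sqrt (q * ln L) \<le> c" using s by simp
  have sq0: "sqrt (q * ln L) \<ge> 0" using q lL by simp
  have S0: "S \<ge> 0" using cT sq0 unfolding S_def by linarith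
  have SS: "q * ln L \<le> S\<^sup>2"
  proof -
    have "sqrt (q * ln L) \<le> S" using cT by (simp add: S_def)
    then have "(sqrt (q * ln L))\<^sup>2 \<le> S\<^sup>2" using sq0 by (intro power_mono) auto
    then show ?thesis using q lL by simp
  qed
  have A: "(\<integral>\<^sup>+x. ennreal (F (\<sigma> * T) \<sigma> q b x) \<partial>gauss1)
      \<le> ennreal (\<sigma> powr q * M + \<bar>b\<bar> powr q * (2 * exp (- S\<^sup>2 / 2)))"
    unfolding M_def
  proof (rule on_bound_gen[OF q s S0])
    show "\<sigma> * S \<le> \<bar>b\<bar> - \<sigma> * T" using s by (simp add: S_def c_def algebra_simps)
  qed
  have ex: "exp (- S\<^sup>2 / 2) \<le> L powr (- q / 2)"
  proof -
    have "exp (- S\<^sup>2 / 2) \<le> exp (- (q * ln L) / 2)" using SS by simp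
    also have "\<dots> = L powr (- q / 2)" using L by (simp add: powr_def)
    finally show ?thesis .
  qed
  have "c powr q * exp (- S\<^sup>2 / 2) \<le> 2 powr q * (T powr q + S powr q) * exp (- S\<^sup>2 / 2)"
    using sum_powr_le[OF T S0, of q] q by (intro mult_right_mono) (auto simp: S_def)
  also have "\<dots> = 2 powr q * (T powr q * exp (- S\<^sup>2 / 2) + S powr q * exp (- S\<^sup>2 / 2))"
    by (simp add: algebra_simps)
  also have "\<dots> \<le> 2 powr q * ((2 + q) powr (q / 2) + q powr (q / 2))"
  proof (intro mult_left_mono add_mono)
    have "T powr q * exp (- S\<^sup>2 / 2) \<le> T powr q * L powr (- q / 2)"
      using ex by (intro mult_left_mono) auto
    also have "\<dots> \<le> (2 + q) powr (q / 2)" using TL_bound[OF L T TL] q by simp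
    finally show "T powr q * exp (- S\<^sup>2 / 2) \<le> (2 + q) powr (q / 2)" .
    show "S powr q * exp (- S\<^sup>2 / 2) \<le> q powr (q / 2)"
      using Egen[OF S0, of q 2] q by simp
  qed simp
  finally have k: "c powr q * exp (- S\<^sup>2 / 2) \<le> 2 powr q * ((2 + q) powr (q / 2) + q powr (q / 2))" .
  have "\<bar>b\<bar> powr q * (2 * exp (- S\<^sup>2 / 2)) = 2 * \<sigma> powr q * (c powr q * exp (- S\<^sup>2 / 2))"
    unfolding bc by (simp add: mult_ac)
  also have "\<dots> \<le> 2 * \<sigma> powr q * (2 powr q * ((2 + q) powr (q / 2) + q powr (q / 2)))"
    using k by (intro mult_left_mono) auto
  finally have "\<sigma> powr q * M + \<bar>b\<bar> powr q * (2 * exp (- S\<^sup>2 / 2))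
     \<le> \<sigma> powr q * (M + 2 * 2 powr q * ((2 + q) powr (q / 2) + q powr (q / 2)))"
    by (simp add: algebra_simps)
  with A show ?thesis unfolding M_def[symmetric] by (elim order_trans) (simp add: ennreal_leI)
qed


lemma risk_eq:
  "risk p s \<sigma> q \<beta> = (\<Sum>j<p. \<integral>\<^sup>+x. ennreal (F (tstar p s \<sigma> q) \<sigma> q (\<beta> j) x) \<partial>gauss1)"
proof -
  have "risk p s \<sigma> q \<beta> = (\<integral>\<^sup>+\<xi>. (\<Sum>j<p. ennreal (F (tstar p s \<sigma> q) \<sigma> q (\<beta> j) (\<xi> j))) \<partial>gaussp p)"
    unfolding risk_def
    by (intro nn_integral_cong) (simp add: F_def beta_hat_def)
  also have "\<dots> = (\<Sum>j<p. \<integral>\<^sup>+\<xi>. ennreal (F (tstar p s \<sigma> q) \<sigma> q (\<beta> j) (\<xi> j)) \<partial>gaussp p)"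
  proof (rule nn_integral_sum)
    fix j assume "j \<in> {..<p}"
    then show "(\<lambda>\<xi>. ennreal (F (tstar p s \<sigma> q) \<sigma> q (\<beta> j) (\<xi> j))) \<in> borel_measurable (gaussp p)"
      unfolding gaussp_def by measurable
  qed
  also have "\<dots> = (\<Sum>j<p. \<integral>\<^sup>+x. ennreal (F (tstar p s \<sigma> q) \<sigma> q (\<beta> j) x) \<partial>gauss1)"
    by (intro sum.cong refl proj_gaussp) auto
  finally show ?thesis .
qed


lemma params:
  fixes p s :: nat and \<sigma> q :: real
  assumes s1: "s \<ge> 1" and sp: "real s < real p / 4" and sg: "\<sigma> > 0" and q: "q \<ge> 1"
  defines "r \<equiv> real p / real s - 1"
  defines "L \<equiv> ln r"
  defines "T \<equiv> sqrt (2 * L + q * ln L)"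
  shows "r > 3" "L \<ge> 1" "ln L \<ge> 0" "T \<ge> 0" "T\<^sup>2 = 2 * L + q * ln L" "T\<^sup>2 \<le> (2 + q) * L"
    "tstar p s \<sigma> q = \<sigma> * T" "a_q1 p s \<sigma> q = \<sigma> * T + \<sigma> * sqrt (q * ln L)"
    "exp (- T\<^sup>2 / 2) = L powr (- q / 2) / r" "real p / r \<le> 2 * real s"
proof -
  have s0: "real s > 0" using s1 by simp
  have "real p / real s > 4" using sp s0 by (simp add: field_simps)
  then show r3: "r > 3" unfolding r_def by simp
  have "exp 1 \<le> r" using exp_le r3 by simp
  then have "ln (exp 1) \<le> ln r" using r3 by (subst ln_le_cancel_iff) auto
  then show L1: "L \<ge> 1" unfolding L_def by simp
  then show lL: "ln L \<ge> 0" by simp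
  have nn: "2 * L + q * ln L \<ge> 0" using L1 lL q by simp
  then show "T \<ge> 0" unfolding T_def by simp
  show T2: "T\<^sup>2 = 2 * L + q * ln L" unfolding T_def using nn by simp
  have "ln L \<le> L" using L1 by (intro ln_bound) simp
  then have "q * ln L \<le> q * L" using q by (intro mult_left_mono) auto
  then show "T\<^sup>2 \<le> (2 + q) * L" unfolding T2 by (simp add: algebra_simps)
  have "2 * \<sigma>\<^sup>2 * L + \<sigma>\<^sup>2 * q * ln L = \<sigma>\<^sup>2 * (2 * L + q * ln L)" by (simp add: algebra_simps)
  then show "tstar p s \<sigma> q = \<sigma> * T"
    unfolding tstar_def T_def L_def[symmetric] r_def[symmetric] using sg by (simp add: real_sqrt_mult)
  have e: "2 * \<sigma>\<^sup>2 * L + q * \<sigma>\<^sup>2 * ln L = \<sigma>\<^sup>2 * (2 * L + q * ln L)" by (simp add: algebra_simps)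
  have "sqrt (2 * \<sigma>\<^sup>2 * L + q * \<sigma>\<^sup>2 * ln L) = \<sigma> * T"
    unfolding T_def e real_sqrt_mult using sg by simp
  moreover have "sqrt (q * \<sigma>\<^sup>2 * ln L) = \<sigma> * sqrt (q * ln L)"
    using sg by (simp add: real_sqrt_mult mult.left_commute[of q])
  ultimately show "a_q1 p s \<sigma> q = \<sigma> * T + \<sigma> * sqrt (q * ln L)"
    unfolding a_q1_def L_def[symmetric] r_def[symmetric] by simp
  have "exp (- T\<^sup>2 / 2) = exp (- L) * exp (- (q * ln L) / 2)" unfolding T2 by (simp add: exp_add[symmetric] field_simps)
  also have "exp (- L) = 1 / r" unfolding L_def using r3 by (simp add: exp_minus inverse_eq_divide)
  also have "exp (- (q * ln L) / 2) = L powr (- q / 2)" using L1 by (simp add: powr_def)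
  finally show "exp (- T\<^sup>2 / 2) = L powr (- q / 2) / r" by simp
  have "r = (real p - real s) / real s" unfolding r_def using s0 by (simp add: field_simps)
  then have "real p / r = real p * real s / (real p - real s)" using s0 by simp
  also have "\<dots> \<le> 2 * real s"
    using sp s0 by (simp add: field_simps)
  finally show "real p / r \<le> 2 * real s" .
qed


lemma sum_le_card:
  fixes f :: "nat \<Rightarrow> ennreal"
  assumes "finite X" "\<And>j. j \<in> X \<Longrightarrow> f j \<le> ennreal B" "B \<ge> 0" "card X \<le> n"
  shows "sum f X \<le> ennreal (real n * B)"
proof -
  have "sum f X \<le> (\<Sum>j\<in>X. ennreal B)" using assms(2) by (rule sum_mono)
  also have "\<dots> = ennreal (real (card X) * B)" using assms(3) by (simp add: ennreal_of_nat_eq_real_of_nat ennreal_mult)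
  also have "\<dots> \<le> ennreal (real n * B)" using assms(3,4) by (intro ennreal_leI mult_right_mono) auto
  finally show ?thesis .
qed

lemma off_total:
  fixes p s :: nat and \<sigma> q r L T M :: real
  assumes q: "q \<ge> 1" and sg: "\<sigma> > 0" and r: "r > 0" and L: "L \<ge> 1" and T: "T \<ge> 0"
    and TL: "T\<^sup>2 \<le> (2 + q) * L" and ex: "exp (- T\<^sup>2 / 2) = L powr (- q / 2) / r"
    and pr: "real p / r \<le> 2 * real s" and M: "M \<ge> 0"
  shows "real p * (\<sigma> powr q * (2 * 2 powr q) * exp (- T\<^sup>2 / 2) * (T powr q + M))
     \<le> \<sigma> powr q * real s * (4 * 2 powr q * ((2 + q) powr (q / 2) + M))"
proof -
  have Lq: "L powr (- q / 2) \<le> 1" using powr_mono[of "- q / 2" 0 L] L q by simp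
  have a: "T powr q * L powr (- q / 2) \<le> (2 + q) powr (q / 2)" using TL_bound[OF _ T TL] L q by simp
  have b: "M * L powr (- q / 2) \<le> M" using Lq M by (simp add: mult_left_le)
  have "real p * (\<sigma> powr q * (2 * 2 powr q) * exp (- T\<^sup>2 / 2) * (T powr q + M))
      = \<sigma> powr q * (2 * 2 powr q) * (real p / r) * (T powr q * L powr (- q / 2) + M * L powr (- q / 2))"
    unfolding ex by (simp add: field_simps)
  also have "\<dots> \<le> \<sigma> powr q * (2 * 2 powr q) * (2 * real s) * ((2 + q) powr (q / 2) + M)"
    using a b pr M r by (intro mult_mono add_mono) auto
  finally show ?thesis by (simp add: algebra_simps)
qed


theorem theorem12:
  fixes q :: real
  assumes "q \<ge> 1"
  shows "\<exists>C::real. \<forall>(p::nat) (s::nat) (\<sigma>::real) (a::real).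
           s \<ge> 1 \<longrightarrow> real s < real p / 4 \<longrightarrow> \<sigma> > 0 \<longrightarrow> a > 0 \<longrightarrow>
           (\<forall>\<beta>\<in>Omega p s a. risk p s \<sigma> q \<beta> \<le> ennreal (C * Phi_ad p s \<sigma> q a))"
proof -
  have q: "q \<ge> 1" by (rule assms)
  define M where "M = sigma_q_pow 1 q"
  define A where "A = (2 + q) powr (q / 2)"
  define K0 where "K0 = 4 * 2 powr q * (A + M)"
  define onL where "onL = M + 2 * 2 powr q * (A + q powr (q / 2))"
  define C2 where "C2 = K0 + M + 2 * (4 * q) powr (q / 2) + 2 powr q * A"
  define C1 where "C1 = (K0 + onL) / M"
  have M0: "M > 0" unfolding M_def using sigma_q_pow_pos[of q] q by simp
  have A0: "A \<ge> 0" unfolding A_def by simp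
  have K00: "K0 \<ge> 0" unfolding K0_def using A0 M0 by simp
  have onL0: "onL \<ge> 0" unfolding onL_def using A0 M0 by simp
  have C10: "C1 \<ge> 0" unfolding C1_def using K00 onL0 M0 by simp
  have C20: "C2 \<ge> 0" unfolding C2_def using K00 A0 M0 by simp
  show ?thesis
  proof (intro exI[of _ "C1 + C2"] allI impI ballI)
    fix p s :: nat and \<sigma> a :: real and \<beta> :: "nat \<Rightarrow> real"
    assume s1: "s \<ge> 1" and sp: "real s < real p / 4" and sg: "\<sigma> > 0" and a0: "a > 0"
      and \<beta>: "\<beta> \<in> Omega p s a"
    define r where "r = real p / real s - 1"
    define L where "L = ln r"
    define T where "T = sqrt (2 * L + q * ln L)"
    note P = params[OF s1 sp sg q, folded r_def, folded L_def, folded T_def]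
    have L0: "L > 0" using P(2) by simp
    define I where "I j = (\<integral>\<^sup>+x. ennreal (F (\<sigma> * T) \<sigma> q (\<beta> j) x) \<partial>gauss1)" for j
    define D where "D = {i\<in>{..<p}. \<beta> i \<noteq> 0}"
    have cD: "card D \<le> s" and bD: "\<And>i. i \<in> D \<Longrightarrow> \<bar>\<beta> i\<bar> \<ge> a"
      using \<beta> unfolding Omega_def D_def by auto
    have fD: "finite D" unfolding D_def by simp
    have DS: "D \<subseteq> {..<p}" unfolding D_def by auto
    have risk: "risk p s \<sigma> q \<beta> = sum I D + sum I ({..<p} - D)"
      unfolding risk_eq P(7) I_def[symmetric]
      using sum.subset_diff[OF DS, of I] by (simp add: add.commute)
    define offB where "offB = \<sigma> powr q * (2 * 2 powr q) * exp (- T\<^sup>2 / 2) * (T powr q + M)"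
    have offB0: "offB \<ge> 0" unfolding offB_def using M0 by simp
    have off: "sum I ({..<p} - D) \<le> ennreal (real p * offB)"
    proof (rule sum_le_card)
      fix j assume "j \<in> {..<p} - D"
      then have "\<beta> j = 0" unfolding D_def by auto
      then show "I j \<le> ennreal offB" unfolding I_def offB_def M_def
        using off_bound[OF q sg P(4)] by simp
    qed (use offB0 in \<open>auto simp: card_Diff_subset fD DS\<close>)
    have offp: "real p * offB \<le> \<sigma> powr q * real s * K0"
      unfolding offB_def K0_def A_def
      using off_total[OF q sg _ P(2) P(4) P(6) P(9) P(10), of M] P(1) M0 by simp
    have Phi0: "Phi_ad p s \<sigma> q a \<ge> 0" unfolding Phi_ad_def M_def using M0 sigma_q_pow_scale[OF sg, of q]
      by (simp add: M_def)
    show "risk p s \<sigma> q \<beta> \<le> ennreal ((C1 + C2) * Phi_ad p s \<sigma> q a)"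
    proof (cases "a \<ge> a_q1 p s \<sigma> q")
      case True
      define onB where "onB = \<sigma> powr q * onL"
      have on: "sum I D \<le> ennreal (real s * onB)"
      proof (rule sum_le_card[OF fD _ _ cD])
        fix j assume j: "j \<in> D"
        have "\<bar>\<beta> j\<bar> \<ge> \<sigma> * T + \<sigma> * sqrt (q * ln L)" using bD[OF j] True P(8) by simp
        then show "I j \<le> ennreal onB" unfolding I_def onB_def onL_def M_def A_def
          using on_large[OF q sg P(4) L0 P(6) P(3)] by simp
      qed (use onL0 in \<open>simp add: onB_def\<close>)
      have "risk p s \<sigma> q \<beta> \<le> ennreal (real s * onB) + ennreal (real p * offB)"
        unfolding risk using on off by (rule add_mono)
      also have "\<dots> = ennreal (real s * onB + real p * offB)"
        using onL0 offB0 by (simp add: ennreal_plus onB_def)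
      also have "\<dots> \<le> ennreal (C1 * (\<sigma> powr q * M * real s))"
      proof (rule ennreal_leI)
        have "real s * onB + real p * offB \<le> real s * onB + \<sigma> powr q * real s * K0" using offp by simp
        also have "\<dots> = C1 * (\<sigma> powr q * M * real s)" unfolding onB_def C1_def using M0 by (simp add: field_simps)
        finally show "real s * onB + real p * offB \<le> C1 * (\<sigma> powr q * M * real s)" .
      qed
      also have "\<dots> \<le> ennreal ((C1 + C2) * Phi_ad p s \<sigma> q a)"
      proof (rule ennreal_leI)
        have "Phi_ad p s \<sigma> q a = \<sigma> powr q * M * real s"
          unfolding Phi_ad_def using True sigma_q_pow_scale[OF sg, of q] by (simp add: M_def)
        then show "C1 * (\<sigma> powr q * M * real s) \<le> (C1 + C2) * Phi_ad p s \<sigma> q a"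
          using C20 Phi0 by (simp add: distrib_right)
      qed
      finally show ?thesis .
    next
      case False
      define onB where "onB = \<sigma> powr q * (M + 2 * (4 * q) powr (q / 2) + 2 powr q * A * L powr (q / 2))"
      have onB0: "onB \<ge> 0" unfolding onB_def using M0 A0 by simp
      have on: "sum I D \<le> ennreal (real s * onB)"
      proof (rule sum_le_card[OF fD _ onB0 cD])
        fix j assume j: "j \<in> D"
        show "I j \<le> ennreal onB" unfolding I_def onB_def M_def A_def
          using on_general[OF q sg P(4) L0 P(6)] by simp
      qed
      have Phi: "Phi_ad p s \<sigma> q a = real s * \<sigma> powr q * (2 * L) powr (q / 2)"
        unfolding Phi_ad_def using False by (simp add: L_def r_def)
      have L2: "(2 * L) powr (q / 2) \<ge> 1" using P(2) q by (simp add: ge_one_powr_ge_zero)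
      have L3: "L powr (q / 2) \<le> (2 * L) powr (q / 2)" using L0 q by (intro powr_mono2) auto
      have "risk p s \<sigma> q \<beta> \<le> ennreal (real s * onB) + ennreal (real p * offB)"
        unfolding risk using on off by (rule add_mono)
      also have "\<dots> = ennreal (real s * onB + real p * offB)"
        using onB0 offB0 by (simp add: ennreal_plus)
      also have "\<dots> \<le> ennreal (C2 * Phi_ad p s \<sigma> q a)"
      proof (rule ennreal_leI)
        have "real s * onB + real p * offB \<le> real s * onB + \<sigma> powr q * real s * K0" using offp by simp
        also have "\<dots> = real s * \<sigma> powr q * (K0 + M + 2 * (4 * q) powr (q / 2) + 2 powr q * A * L powr (q / 2))"
          unfolding onB_def by (simp add: algebra_simps)
        also have "\<dots> \<le> real s * \<sigma> powr q * (C2 * (2 * L) powr (q / 2))"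
        proof (intro mult_left_mono)
          have "K0 + M + 2 * (4 * q) powr (q / 2) \<le> (K0 + M + 2 * (4 * q) powr (q / 2)) * (2 * L) powr (q / 2)"
            using mult_left_mono[OF L2, of "K0 + M + 2 * (4 * q) powr (q / 2)"] K00 M0 by simp
          moreover have "2 powr q * A * L powr (q / 2) \<le> 2 powr q * A * (2 * L) powr (q / 2)"
            using L3 A0 by (intro mult_left_mono) auto
          ultimately show "K0 + M + 2 * (4 * q) powr (q / 2) + 2 powr q * A * L powr (q / 2) \<le> C2 * (2 * L) powr (q / 2)"
            unfolding C2_def by (simp add: algebra_simps)
        qed auto
        also have "\<dots> = C2 * Phi_ad p s \<sigma> q a" unfolding Phi by (simp add: mult_ac)
        finally show "real s * onB + real p * offB \<le> C2 * Phi_ad p s \<sigma> q a" .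
      qed
      also have "\<dots> \<le> ennreal ((C1 + C2) * Phi_ad p s \<sigma> q a)"
        using C10 Phi0 by (intro ennreal_leI) (simp add: distrib_right)
      finally show ?thesis .
    qed
  qed
qed

end
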